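(* Consider the system of ordinary differential equations \[ \begin{aligned} \frac{dr_a}{dt} &= m_a\frac{(p_a/\theta_{aa})^{n_{aa}}}{1+(p_a/\theta_{aa})^{n_{aa}}+(p_b/\theta_b)^{n_b}}-\gamma_a r_a+A_1,\\ \frac{dr_b}{dt} &= \frac{m_b}{1+(p_a/\theta_a)^{n_a}}-\gamma_b r_b+B_1,\\ \frac{dp_a}{dt} &= k_a r_a-\delta_a p_a,\qquad \frac{dp_b}{dt} = k_b r_b-\delta_b p_b, \end{aligned} \] where $m_a,m_b,\gamma_a,\gamma_b,k_a,k_b,\delta_a,\delta_b,\theta_a,\theta_b,\theta_{aa}>0$, $A_1,B_1\ge 0$, and $n_a,n_b,n_{aa}$ are positive integers. Let $S^*=(r_a^*,r_b^*,p_a^*,p_b^* )$ be a steady state of this system with $p_a^*>0$, $p_b^*>0$. Set, with $p_a=p_a^*$, $p_b=p_b^*$, \[ X=\frac{m_a n_{aa} p_a^{n_{aa}-1}\theta_b^{n_b}\theta_{aa}^{n_{aa}}(p_b^{n_b}+\theta_b^{n_b})}{(p_a^{n_{aa}}\theta_b^{n_b}+p_b^{n_b}\theta_{aa}^{n_{aa}}+\theta_b^{n_b}\theta_{aa}^{n_{aa}})^2},\quad Y=-\frac{m_a n_b p_a^{n_{aa}}p_b^{n_b-1}\theta_b^{n_b}\theta_{aa}^{n_{aa}}}{(p_a^{n_{aa}}\theta_b^{n_b}+p_b^{n_b}\theta_{aa}^{n_{aa}}+\theta_b^{n_b}\theta_{aa}^{n_{aa}})^2},\quad Z=-\frac{m_b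 n_a p_a^{n_a-1}\theta_a^{n_a}}{(p_a^{n_a}+\theta_a^{n_a})^2}, \] and \[ \begin{aligned} \epsilon_1&=\gamma_a+\gamma_b+\delta_a+\delta_b,\\ \epsilon_2&=\gamma_a\gamma_b+(\gamma_a+\gamma_b)(\delta_a+\delta_b)+\delta_a\delta_b-k_aX,\\ \epsilon_3&=\delta_a\delta_b(\gamma_a+\gamma_b)+(\delta_a+\delta_b)\gamma_a\gamma_b-k_a(\delta_b+\gamma_b)X,\\ \epsilon_4&=\gamma_a\gamma_b\delta_a\delta_b-k_ak_bYZ-k_a\gamma_b\delta_bX. \end{aligned} \] If $\epsilon_1>0$, $\epsilon_3>0$, $\epsilon_4>0$ and $\epsilon_1\epsilon_2\epsilon_3-\epsilon_1^2\epsilon_4-\epsilon_3^2>0$, then $S^*$ is locally asymptotically stable.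
   Context: This models a two-gene network in which gene $a$ is activated by its own protein $p_a$ and repressed by protein $p_b$ (combined via a competitive OR logic), and gene $b$ is repressed by $p_a$; $r_a,r_b$ are mRNA concentrations and $p_a,p_b$ protein concentrations. A steady state is a point where all four right-hand sides vanish. *)

theory Defs
  imports "HOL-Analysis.Analysis"
begin

type_synonym state4 = "real \<times> real \<times> real \<times> real"

definition grn_field ::
  "real \<Rightarrow> real \<Rightarrow> real \<Rightarrow> real \<Rightarrow> real \<Rightarrow> real \<Rightarrow> real \<Rightarrow> real \<Rightarrow>
   real \<Rightarrow> real \<Rightarrow> real \<Rightarrow> real \<Rightarrow> real \<Rightarrow> nat \<Rightarrow> nat \<Rightarrow> nat \<Rightarrow> state4 \<Rightarrow> state4" where
  "grn_field ma mb ga gb ka kb da db tha thb thaa A1 B1 na nb naa =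
     (\<lambda>(ra, rb, pa, pb).
        (ma * (pa / thaa) ^ naa / (1 + (pa / thaa) ^ naa + (pb / thb) ^ nb) - ga * ra + A1,
         mb / (1 + (pa / tha) ^ na) - gb * rb + B1,
         ka * ra - da * pa,
         kb * rb - db * pb))"

definition ode_solution :: "('a::real_normed_vector \<Rightarrow> 'a) \<Rightarrow> 'a \<Rightarrow> (real \<Rightarrow> 'a) \<Rightarrow> bool" where
  "ode_solution f x0 x \<longleftrightarrow> x 0 = x0 \<and>
     (\<forall>t\<ge>0. (x has_vector_derivative f (x t)) (at t within {0..}))"

definition lyapunov_stable :: "('a::real_normed_vector \<Rightarrow> 'a) \<Rightarrow> 'a \<Rightarrow> bool" where
  "lyapunov_stable f S \<longleftrightarrow>
     (\<forall>\<epsilon>>0. \<exists>\<delta>>0. \<forall>x0. dist x0 S < \<delta> \<longrightarrow>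
        (\<exists>x. ode_solution f x0 x) \<and>
        (\<forall>x. ode_solution f x0 x \<longrightarrow> (\<forall>t\<ge>0. dist (x t) S < \<epsilon>)))"

definition locally_asymptotically_stable :: "('a::real_normed_vector \<Rightarrow> 'a) \<Rightarrow> 'a \<Rightarrow> bool" where
  "locally_asymptotically_stable f S \<longleftrightarrow>
     lyapunov_stable f S \<and>
     (\<exists>\<eta>>0. \<forall>x0. dist x0 S < \<eta> \<longrightarrow>
        (\<forall>x. ode_solution f x0 x \<longrightarrow> (x \<longlongrightarrow> S) at_top))"

end

theory Submission
  imports Defs
begin

primrec picard :: "('a::euclidean_space \<Rightarrow> 'a) \<Rightarrow> 'a \<Rightarrow> nat \<Rightarrow> real \<Rightarrow> 'a" where
  "picard F x0 0 = (\<lambda>t. x0)"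
| "picard F x0 (Suc n) = (\<lambda>t. x0 + integral {0..t} (\<lambda>s. F (picard F x0 n s)))"

lemma integral_cpow:
  assumes "t \<ge> 0"
  shows "integral {0..t} (\<lambda>s::real. c * s ^ k) = c * t ^ Suc k / Suc k"
proof -
  have "((\<lambda>s::real. c * s ^ k) has_integral ((\<lambda>s. c * s ^ Suc k / Suc k) t - (\<lambda>s. c * s ^ Suc k / Suc k) 0)) {0..t}"
    apply (rule fundamental_theorem_of_calculus)
    using assms apply simp
    apply (auto intro!: derivative_eq_intros simp: has_real_derivative_iff_has_vector_derivative[symmetric])
    apply (case_tac k)
     apply (auto simp: field_simps)
    done
  from integral_unique[OF this] show ?thesis by simp
qed

locale picard_loc =
  fixes F :: "'a::euclidean_space \<Rightarrow> 'a" and L :: real and x0 :: 'a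
  assumes lip: "\<And>u v. norm (F u - F v) \<le> L * norm (u - v)" and Lpos: "L > 0"
begin

abbreviation "P \<equiv> picard F x0"

lemma contF: "continuous_on S F"
proof -
  have "L-lipschitz_on S F"
    by (rule lipschitz_onI) (use lip Lpos in \<open>auto simp: dist_norm\<close>)
  then show ?thesis by (rule lipschitz_on_continuous_on)
qed

lemma contP: "continuous_on {0..T} (P n)"
proof (induction n arbitrary: T)
  case 0 then show ?case by simp
next
  case (Suc n)
  have "continuous_on {0..T} (\<lambda>s. F (P n s))"
    by (rule continuous_on_compose2[OF contF Suc]) auto
  then have "(\<lambda>s. F (P n s)) integrable_on {0..T}"
    by (rule integrable_continuous_real)
  then have "continuous_on {0..T} (\<lambda>t. integral {0..t} (\<lambda>s. F (P n s)))"
    by (rule indefinite_integral_continuous_1)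
  then show ?case by (auto intro!: continuous_intros)
qed

lemma intP: "(\<lambda>s. F (P n s)) integrable_on {0..T}"
  by (rule integrable_continuous_real, rule continuous_on_compose2[OF contF contP]) auto

definition "M = norm (F x0)"

lemma boundP:
  assumes "t \<ge> 0"
  shows "norm (P (Suc n) t - P n t) \<le> M * L ^ n * t ^ Suc n / fact (Suc n)"
  using assms
proof (induction n arbitrary: t)
  case 0 then show ?case by (simp add: M_def)
next
  case (Suc n)
  have "P (Suc (Suc n)) t - P (Suc n) t = integral {0..t} (\<lambda>s. F (P (Suc n) s) - F (P n s))"
    by (subst integral_diff[OF intP intP]) simp
  also have "norm \<dots> \<le> integral {0..t} (\<lambda>s. (L * (M * L ^ n / fact (Suc n))) * s ^ Suc n)"
  proof (rule integral_norm_bound_integral)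
    show "(\<lambda>s. F (P (Suc n) s) - F (P n s)) integrable_on {0..t}"
      by (rule integrable_diff[OF intP intP])
    show "(\<lambda>s. (L * (M * L ^ n / fact (Suc n))) * s ^ Suc n) integrable_on {0..t}"
      by (rule integrable_continuous_real) (auto intro!: continuous_intros)
    fix s assume s: "s \<in> {0..t}"
    have "norm (F (P (Suc n) s) - F (P n s)) \<le> L * norm (P (Suc n) s - P n s)" by (rule lip)
    also have "\<dots> \<le> L * (M * L ^ n * s ^ Suc n / fact (Suc n))"
      using Suc.IH[of s] s Lpos by (intro mult_left_mono) auto
    finally show "norm (F (P (Suc n) s) - F (P n s)) \<le> (L * (M * L ^ n / fact (Suc n))) * s ^ Suc n"
      by simp
  qed
  also have "\<dots> = (L * (M * L ^ n / fact (Suc n))) * t ^ Suc (Suc n) / Suc (Suc n)"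
    by (rule integral_cpow) fact
  also have "\<dots> = M * L ^ Suc n * t ^ Suc (Suc n) / fact (Suc (Suc n))"
    by (simp add: field_simps)
  finally show ?case .
qed


definition "D n t = P (Suc n) t - P n t"
definition "xl t = x0 + (\<Sum>i. D i t)"

lemma P_sum: "P n t = x0 + (\<Sum>i<n. D i t)"
  by (induction n) (auto simp: D_def)

lemma Mnn: "M \<ge> 0" by (simp add: M_def)

lemma summ: assumes "T \<ge> 0" shows "summable (\<lambda>n. M * L ^ n * T ^ Suc n / fact (Suc n))"
proof (rule summable_comparison_test')
  show "summable (\<lambda>n. (M * T) * (inverse (fact n) * (L * T) ^ n))"
    by (intro summable_mult summable_exp)
  fix n :: nat
  have "fact n \<le> (fact (Suc n) :: real)" by (rule fact_mono) auto
  moreover have "(0::real) < fact n" by simp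
  moreover have "0 \<le> M * L ^ n * T ^ Suc n" using Mnn Lpos assms by simp
  ultimately have "M * L ^ n * T ^ Suc n / fact (Suc n) \<le> M * L ^ n * T ^ Suc n / fact n"
    by (intro divide_left_mono) auto
  then show "norm (M * L ^ n * T ^ Suc n / fact (Suc n)) \<le> (M * T) * (inverse (fact n) * (L * T) ^ n)"
    using Mnn Lpos assms by (simp add: power_mult_distrib field_simps)
qed

lemma unif: assumes "T \<ge> 0"
  shows "uniform_limit {0..T} (\<lambda>n t. \<Sum>i<n. D i t) (\<lambda>t. \<Sum>i. D i t) sequentially"
proof (rule Weierstrass_m_test[OF _ summ[OF assms]])
  fix n t assume t: "t \<in> {0..T}"
  have "norm (D n t) \<le> M * L ^ n * t ^ Suc n / fact (Suc n)"
    unfolding D_def using t by (intro boundP) auto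
  also have "\<dots> \<le> M * L ^ n * T ^ Suc n / fact (Suc n)"
    using t Mnn Lpos by (intro divide_right_mono mult_left_mono power_mono) auto
  finally show "norm (D n t) \<le> M * L ^ n * T ^ Suc n / fact (Suc n)" .
qed

lemma Pconv: assumes "T \<ge> 0" "e > 0"
  shows "\<forall>\<^sub>F n in sequentially. \<forall>t\<in>{0..T}. norm (P n t - xl t) < e"
proof -
  have "\<forall>\<^sub>F n in sequentially. \<forall>t\<in>{0..T}. dist (\<Sum>i<n. D i t) (\<Sum>i. D i t) < e"
    using unif[OF assms(1)] assms(2) by (simp add: uniform_limit_iff)
  then show ?thesis
    by eventually_elim (simp add: P_sum xl_def dist_norm)
qed

lemma contxl: assumes "T \<ge> 0" shows "continuous_on {0..T} xl"
proof -
  have "continuous_on {0..T} (\<lambda>t. \<Sum>i. D i t)"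
  proof (rule uniform_limit_theorem[OF _ unif[OF assms]])
    show "\<forall>\<^sub>F n in sequentially. continuous_on {0..T} (\<lambda>t. \<Sum>i<n. D i t)"
      unfolding D_def by (intro always_eventually allI continuous_on_sum continuous_on_diff contP)
  qed simp
  then show ?thesis unfolding xl_def by (auto intro!: continuous_intros)
qed

lemma intxl: "(\<lambda>s. F (xl s)) integrable_on {0..T}"
proof (cases "T \<ge> 0")
  case True
  show ?thesis
    by (rule integrable_continuous_real, rule continuous_on_compose2[OF contF contxl[OF True]]) auto
next
  case False then have "{0..T} = {}" by auto
  then show ?thesis by (metis integrable_on_empty)
qed

lemma xl_eq: assumes t: "t \<ge> 0"
  shows "xl t = x0 + integral {0..t} (\<lambda>s. F (xl s))"
proof -
  have l1: "(\<lambda>n. P (Suc n) t) \<longlonglongrightarrow> xl t"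
  proof (rule LIMSEQ_I)
    fix e :: real assume "e > 0"
    from Pconv[OF t this] obtain N where "\<And>n. n \<ge> N \<Longrightarrow> \<forall>s\<in>{0..t}. norm (P n s - xl s) < e"
      by (auto simp: eventually_sequentially)
    then show "\<exists>N. \<forall>n\<ge>N. norm (P (Suc n) t - xl t) < e" using t
      by (metis atLeastAtMost_iff le_SucI order_refl)
  qed
  have l2: "(\<lambda>n. P (Suc n) t) \<longlonglongrightarrow> x0 + integral {0..t} (\<lambda>s. F (xl s))"
  proof (rule LIMSEQ_I)
    fix e :: real assume e: "e > 0"
    define e' where "e' = e / (2 * (L * t + 1))"
    have e': "e' > 0" unfolding e'_def using e Lpos t by (auto intro!: divide_pos_pos add_nonneg_pos)
    from Pconv[OF t e'] obtain N where N: "\<And>n. n \<ge> N \<Longrightarrow> \<forall>s\<in>{0..t}. norm (P n s - xl s) < e'"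
      by (auto simp: eventually_sequentially)
    show "\<exists>N. \<forall>n\<ge>N. norm (P (Suc n) t - (x0 + integral {0..t} (\<lambda>s. F (xl s)))) < e"
    proof (intro exI[of _ N] allI impI)
      fix n assume n: "n \<ge> N"
      have "P (Suc n) t - (x0 + integral {0..t} (\<lambda>s. F (xl s))) = integral {0..t} (\<lambda>s. F (P n s) - F (xl s))"
        by (subst integral_diff[OF intP intxl]) simp
      also have "norm \<dots> \<le> integral {0..t} (\<lambda>s. L * e')"
      proof (rule integral_norm_bound_integral)
        show "(\<lambda>s. F (P n s) - F (xl s)) integrable_on {0..t}" by (rule integrable_diff[OF intP intxl])
        fix s assume s: "s \<in> {0..t}"
        have a: "norm (F (P n s) - F (xl s)) \<le> L * norm (P n s - xl s)" by (rule lip)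
        have "norm (P n s - xl s) < e'" using N[OF n] s by blast
        then have "L * norm (P n s - xl s) \<le> L * e'" using Lpos by (intro mult_left_mono) auto
        with a show "norm (F (P n s) - F (xl s)) \<le> L * e'" by linarith
      qed auto
      also have "\<dots> = t * L * e'" using t by simp
      also have "\<dots> < e"
      proof -
        have "t * L * e' = e * (L * t) / (2 * (L * t + 1))" unfolding e'_def by (simp add: field_simps)
        also have "\<dots> < e"
        proof -
          have u: "0 \<le> L * t" using Lpos t by simp
          have "e * (L * t) < e * (2 * (L * t + 1))" using e u by (intro mult_strict_left_mono) auto
          then show ?thesis using u by (subst pos_divide_less_eq) auto
        qed
        finally show ?thesis .
      qed
      finally show "norm (P (Suc n) t - (x0 + integral {0..t} (\<lambda>s. F (xl s)))) < e" .
    qed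
  qed
  from LIMSEQ_unique[OF l1 l2] show ?thesis .
qed

lemma exists_sol:
  "\<exists>x. x 0 = x0 \<and> (\<forall>t\<ge>0. (x has_vector_derivative F (x t)) (at t within {0..}))"
proof -
  define y where "y t = x0 + integral {0..t} (\<lambda>s. F (xl s))" for t
  show ?thesis proof (intro exI[of _ y] conjI allI impI)
  show "y 0 = x0" by (simp add: y_def)
  fix t :: real assume t: "t \<ge> 0"
  have "((\<lambda>u. integral {0..u} (\<lambda>s. F (xl s))) has_vector_derivative F (xl t)) (at t within {0..t+1})"
    by (rule integral_has_vector_derivative, rule continuous_on_compose2[OF contF contxl]) (use t in auto)
  moreover have "at t within {0..t+1} = at t within {0..}"
    by (rule at_within_nhd[of _ "{..<t+1}"]) auto
  ultimately have "((\<lambda>u. integral {0..u} (\<lambda>s. F (xl s))) has_vector_derivative F (xl t)) (at t within {0..})"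
    by simp
  then have "(y has_vector_derivative F (xl t)) (at t within {0..})"
    unfolding y_def by (auto intro!: derivative_eq_intros)
  then show "(y has_vector_derivative F (y t)) (at t within {0..})"
    using xl_eq[OF t] by (simp add: y_def)
qed
qed

end

lemma global_existence:
  fixes F :: "'a::euclidean_space \<Rightarrow> 'a"
  assumes "\<And>u v. norm (F u - F v) \<le> L * norm (u - v)" "L > 0"
  shows "\<exists>x. x 0 = x0 \<and> (\<forall>t\<ge>0. (x has_vector_derivative F (x t)) (at t within {0..}))"
  using picard_loc.exists_sol[of F L x0] assms unfolding picard_loc_def by blast

lemma nonincr:
  fixes \<phi> \<phi>' :: "real \<Rightarrow> real"
  assumes T: "0 \<le> T" and cont: "continuous_on {0..T} \<phi>"
    and d: "\<And>s. 0 < s \<Longrightarrow> s < T \<Longrightarrow> (\<phi> has_real_derivative \<phi>' s) (at s)"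
    and n: "\<And>s. 0 < s \<Longrightarrow> s < T \<Longrightarrow> \<phi>' s \<le> 0"
  shows "\<phi> T \<le> \<phi> 0"
proof (cases "T = 0")
  case True then show ?thesis by simp
next
  case False
  with T have T': "0 < T" by simp
  obtain \<xi> where \<xi>: "0 < \<xi>" "\<xi> < T" "\<phi> T - \<phi> 0 = \<phi>' \<xi> * (T - 0)"
    using mvt[OF T' cont, of "\<lambda>s h. \<phi>' s * h"] d by (auto simp: has_field_derivative_def)
  then have "\<phi>' \<xi> * T \<le> 0" using n[OF \<xi>(1,2)] T' by (simp add: mult_nonpos_nonneg)
  with \<xi> show ?thesis by simp
qed

lemma lyap_decay:
  fixes G :: "'a::real_normed_vector \<Rightarrow> 'a" and V :: "'a \<Rightarrow> real" and DV :: "'a \<Rightarrow> 'a \<Rightarrow> real"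
  assumes a: "a > 0" and c: "c \<ge> 0" and rho: "\<rho> > 0"
    and Vlow: "\<And>y. a * (norm y)^2 \<le> V y"
    and Vd: "\<And>y. (V has_derivative DV y) (at y)"
    and dec: "\<And>z. z \<in> cball S \<rho> \<Longrightarrow> DV (z - S) (G z) \<le> - c * V (z - S)"
    and x0: "x 0 = x0" and sol: "\<And>t. t \<ge> 0 \<Longrightarrow> (x has_vector_derivative G (x t)) (at t within {0..})"
    and start: "V (x0 - S) < a * \<rho>^2"
  shows "\<forall>t\<ge>0. x t \<in> ball S \<rho> \<and> V (x t - S) \<le> V (x0 - S) * exp (- c * t)"
proof -
  define \<phi> where "\<phi> t = V (x t - S) * exp (c * t)" for t
  define \<phi>' where "\<phi>' t = DV (x t - S) (G (x t)) * exp (c * t) + V (x t - S) * (exp (c * t) * c)" for t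
  have dphi: "(\<phi> has_real_derivative \<phi>' t) (at t within {0..})" if t: "t \<ge> 0" for t
  proof -
    have dx: "((\<lambda>t. x t - S) has_derivative (\<lambda>h. h *\<^sub>R G (x t))) (at t within {0..})"
      using sol[OF t] unfolding has_vector_derivative_def by (auto intro!: derivative_eq_intros)
    have "((\<lambda>t. V (x t - S)) has_derivative (\<lambda>h. DV (x t - S) (h *\<^sub>R G (x t)))) (at t within {0..})"
      by (rule has_derivative_compose[OF dx Vd])
    moreover have "linear (DV (x t - S))" by (rule bounded_linear.linear[OF has_derivative_bounded_linear[OF Vd]])
    ultimately have dV: "((\<lambda>t. V (x t - S)) has_real_derivative DV (x t - S) (G (x t))) (at t within {0..})"
      by (simp add: has_field_derivative_def linear.scaleR mult.commute[of _ "DV (x t - S) (G (x t))"])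
    show ?thesis unfolding \<phi>_def \<phi>'_def
      by (auto intro!: derivative_eq_intros dV)
  qed
  have contphi: "continuous_on {0..T} \<phi>" for T
  proof -
    have "continuous_on {0..} \<phi>"
      unfolding continuous_on_eq_continuous_within using dphi DERIV_continuous by fastforce
    then show ?thesis by (rule continuous_on_subset) auto
  qed
  have dphi': "(\<phi> has_real_derivative \<phi>' t) (at t)" if "t > 0" for t
  proof -
    have "at t within {0..} = at t"
      by (rule at_within_interior) (use that interior_Ici[of "-1::real" 0] in auto)
    with dphi[of t] that show ?thesis by simp
  qed
  have phineg: "\<phi>' t \<le> 0" if "t \<ge> 0" "x t \<in> ball S \<rho>" for t
  proof -
    have "DV (x t - S) (G (x t)) \<le> - c * V (x t - S)" using dec[of "x t"] that by auto
    then have "DV (x t - S) (G (x t)) + c * V (x t - S) \<le> 0" by simp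
    then have "(DV (x t - S) (G (x t)) + c * V (x t - S)) * exp (c * t) \<le> 0"
      by (simp add: mult_nonpos_nonneg)
    then show ?thesis unfolding \<phi>'_def by (simp add: algebra_simps)
  qed
  have V0: "V y \<ge> 0" for y using Vlow[of y] a by (smt (verit) mult_nonneg_nonneg zero_le_power2)
  have inball: "z \<in> ball S \<rho>" if "a * (norm (z - S))^2 \<le> V (z - S)" "V (z - S) < a * \<rho>^2" for z
  proof -
    have "(norm (z - S))^2 < \<rho>^2" using that a by (smt (verit) mult_less_cancel_left_pos)
    then have "norm (z - S) < \<rho>" using rho by (smt (verit) power_mono norm_ge_zero)
    then show ?thesis by (simp add: dist_norm norm_minus_commute)
  qed
  have x0ball: "x 0 \<in> ball S \<rho>" using inball[OF Vlow start] x0 by simp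
  have allball: "\<forall>t\<ge>0. x t \<in> ball S \<rho>"
  proof (rule ccontr)
    assume nb: "\<not> (\<forall>t\<ge>0. x t \<in> ball S \<rho>)"
    define E where "E = {0..} \<inter> x -` (- ball S \<rho>)"
    have contx: "continuous_on {0..} x"
      unfolding continuous_on_eq_continuous_within
      using sol has_vector_derivative_continuous by fastforce
    have "closed E" unfolding E_def
      by (rule continuous_closed_preimage[OF contx]) auto
    moreover have "E \<noteq> {}" using nb unfolding E_def by auto
    moreover have "bdd_below E" unfolding E_def by (rule bdd_belowI[of _ 0]) auto
    ultimately have TE: "Inf E \<in> E" by (rule closed_contains_Inf[rotated 2])
    define T where "T = Inf E"
    have T0: "T \<ge> 0" using TE unfolding T_def E_def by auto
    have before: "x s \<in> ball S \<rho>" if "0 \<le> s" "s < T" for s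
    proof (rule ccontr)
      assume "x s \<notin> ball S \<rho>"
      then have "s \<in> E" using that unfolding E_def by auto
      then have "T \<le> s" unfolding T_def by (rule cInf_lower) fact
      with that show False by simp
    qed
    have "\<phi> T \<le> \<phi> 0"
      by (rule nonincr[OF T0 contphi dphi' phineg]) (use before in auto)
    then have "V (x T - S) * exp (c * T) \<le> V (x0 - S)" unfolding \<phi>_def by (simp add: x0)
    moreover have "V (x T - S) \<le> V (x T - S) * exp (c * T)"
      using V0[of "x T - S"] c T0 by (simp add: mult_le_cancel_left1 not_less)
    ultimately have "V (x T - S) < a * \<rho>^2" using start by simp
    then have "x T \<in> ball S \<rho>" using inball Vlow by blast
    with TE show False unfolding T_def E_def by auto
  qed
  show ?thesis
  proof (intro allI impI conjI)
    fix t :: real assume t: "t \<ge> 0"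
    show "x t \<in> ball S \<rho>" using allball t by simp
    have "\<phi> t \<le> \<phi> 0"
      by (rule nonincr[OF t contphi dphi' phineg]) (use allball in auto)
    then have "V (x t - S) * exp (c * t) \<le> V (x0 - S)" unfolding \<phi>_def by (simp add: x0)
    then have "V (x t - S) * exp (c * t) * exp (- c * t) \<le> V (x0 - S) * exp (- c * t)"
      by (simp add: mult_right_mono)
    then show "V (x t - S) \<le> V (x0 - S) * exp (- c * t)"
      by (simp add: mult.assoc exp_add[symmetric])
  qed
qed

lemma abstract_las:
  fixes f F :: "'a::euclidean_space \<Rightarrow> 'a" and V :: "'a \<Rightarrow> real" and DV :: "'a \<Rightarrow> 'a \<Rightarrow> real"
  assumes a: "a > 0" and b: "b > 0" and c: "c > 0" and rho: "\<rho> > 0"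
    and Vlow: "\<And>y. a * (norm y)^2 \<le> V y"
    and Vup: "\<And>y. V y \<le> b * (norm y)^2"
    and Vd: "\<And>y. (V has_derivative DV y) (at y)"
    and decf: "\<And>z. z \<in> cball S \<rho> \<Longrightarrow> DV (z - S) (f z) \<le> - c * V (z - S)"
    and Flip: "\<And>u v. norm (F u - F v) \<le> L * norm (u - v)" and L: "L > 0"
    and Feq: "\<And>z. z \<in> cball S \<rho> \<Longrightarrow> F z = f z"
  shows "locally_asymptotically_stable f S"
proof -
  define k where "k = sqrt (a / b) / 2"
  have k: "k > 0" unfolding k_def using a b by simp
  have bk: "b * k^2 = a / 4" unfolding k_def using a b by (simp add: power_divide)
  have small: "b * (norm y)^2 < a * r^2 / 4" if "norm y < k * r" "r > 0" for y r
  proof -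
    have "(norm y)^2 < (k * r)^2" using that by (intro power_strict_mono) auto
    then have "b * (norm y)^2 < b * (k * r)^2" using b by simp
    also have "\<dots> = a * r^2 / 4" using bk by (simp add: power_mult_distrib)
    finally show ?thesis .
  qed
  have startV: "V (x0 - S) < a * \<rho>^2" if "norm (x0 - S) < k * \<rho>" for x0
  proof -
    have "a * \<rho>^2 / 4 < a * \<rho>^2" using a rho by simp
    then show ?thesis using Vup[of "x0 - S"] small[OF that rho] by linarith
  qed
  have decF: "\<And>z. z \<in> cball S \<rho> \<Longrightarrow> DV (z - S) (F z) \<le> - c * V (z - S)"
    using decf Feq by simp
  have sol_bound: "\<forall>t\<ge>0. x t \<in> ball S \<rho> \<and> V (x t - S) \<le> V (x0 - S) * exp (- c * t)"
    if "ode_solution f x0 x" "norm (x0 - S) < k * \<rho>" for x x0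
    using that by (intro lyap_decay[OF a _ rho Vlow Vd decf])
       (auto simp: ode_solution_def c less_imp_le startV)
  have exist: "\<exists>x. ode_solution f x0 x" if "norm (x0 - S) < k * \<rho>" for x0
  proof -
    obtain x where x: "x 0 = x0" "\<And>t. t \<ge> 0 \<Longrightarrow> (x has_vector_derivative F (x t)) (at t within {0..})"
      using global_existence[OF Flip L, of x0] by blast
    have "\<forall>t\<ge>0. x t \<in> ball S \<rho> \<and> V (x t - S) \<le> V (x0 - S) * exp (- c * t)"
      by (rule lyap_decay[OF a _ rho Vlow Vd decF x startV[OF that]]) (use c in auto)
    then have "ode_solution f x0 x" unfolding ode_solution_def using x Feq
      by (metis ball_subset_cball subsetD)
    then show ?thesis by blast
  qed
  have normb: "(norm (x t - S))^2 \<le> (b / a) * (norm (x0 - S))^2 * exp (- c * t)"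
    if "ode_solution f x0 x" "norm (x0 - S) < k * \<rho>" "t \<ge> 0" for x x0 t
  proof -
    have "a * (norm (x t - S))^2 \<le> V (x0 - S) * exp (- c * t)"
      using sol_bound[OF that(1,2)] that(3) Vlow[of "x t - S"] by force
    also have "\<dots> \<le> b * (norm (x0 - S))^2 * exp (- c * t)"
      using Vup[of "x0 - S"] by (intro mult_right_mono) auto
    finally show ?thesis using a by (simp add: field_simps)
  qed
  show ?thesis unfolding locally_asymptotically_stable_def lyapunov_stable_def
  proof (intro conjI allI impI)
    fix \<epsilon> :: real assume e: "\<epsilon> > 0"
    show "\<exists>\<delta>>0. \<forall>x0. dist x0 S < \<delta> \<longrightarrow> (\<exists>x. ode_solution f x0 x) \<and>
        (\<forall>x. ode_solution f x0 x \<longrightarrow> (\<forall>t\<ge>0. dist (x t) S < \<epsilon>))"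
    proof (intro exI[of _ "k * min \<rho> \<epsilon>"] conjI allI impI)
      show "k * min \<rho> \<epsilon> > 0" using k rho e by simp
      fix x0 assume d: "dist x0 S < k * min \<rho> \<epsilon>"
      have d1: "norm (x0 - S) < k * \<rho>" using d k by (simp add: dist_norm) (smt (verit) mult_left_mono min.cobounded1)
      have d2: "norm (x0 - S) < k * \<epsilon>" using d k by (simp add: dist_norm) (smt (verit) mult_left_mono min.cobounded2)
      show "\<exists>x. ode_solution f x0 x" by (rule exist[OF d1])
      fix x and t :: real assume x: "ode_solution f x0 x" and t: "t \<ge> 0"
      have "(norm (x t - S))^2 \<le> (b / a) * (norm (x0 - S))^2 * exp (- c * t)" by (rule normb[OF x d1 t])
      also have "\<dots> \<le> (b / a) * (norm (x0 - S))^2"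
        using a b c t by (intro mult_left_le) auto
      also have "\<dots> < \<epsilon>^2"
      proof -
        have "b * (norm (x0 - S))^2 < a * \<epsilon>^2 / 4" by (rule small[OF d2 e])
        then have "(b / a) * (norm (x0 - S))^2 < \<epsilon>^2 / 4" using a by (simp add: field_simps)
        moreover have "0 < \<epsilon>^2" using e by simp
        ultimately show ?thesis by linarith
      qed
      finally have "(norm (x t - S))^2 < \<epsilon>^2" .
      then have "norm (x t - S) < \<epsilon>" using e by (smt (verit) power_mono norm_ge_zero)
      then show "dist (x t) S < \<epsilon>" by (simp add: dist_norm)
    qed
  next
    show "\<exists>\<eta>>0. \<forall>x0. dist x0 S < \<eta> \<longrightarrow> (\<forall>x. ode_solution f x0 x \<longrightarrow> (x \<longlongrightarrow> S) at_top)"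
    proof (intro exI[of _ "k * \<rho>"] conjI allI impI)
      show "k * \<rho> > 0" using k rho by simp
      fix x0 x assume d: "dist x0 S < k * \<rho>" and x: "ode_solution f x0 x"
      have d1: "norm (x0 - S) < k * \<rho>" using d by (simp add: dist_norm)
      define C where "C = sqrt ((b / a) * (norm (x0 - S))^2)"
      have lim0: "((\<lambda>t. C * exp (- (c / 2) * t)) \<longlongrightarrow> 0) at_top"
      proof -
        have "LIM t at_top. (- (c / 2)) * t :> at_bot"
          by (rule filterlim_tendsto_neg_mult_at_bot[OF tendsto_const _ filterlim_ident]) (use c in simp)
        then have "((\<lambda>t. exp (- (c / 2) * t)) \<longlongrightarrow> 0) at_top"
          by (rule filterlim_compose[OF exp_at_bot])
        then show ?thesis by (rule tendsto_mult_right_zero)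
      qed
      have ev: "\<forall>\<^sub>F t in at_top. norm (x t - S) \<le> C * exp (- (c / 2) * t)"
      proof (rule eventually_at_top_linorderI[of 0])
        fix t :: real assume t: "t \<ge> 0"
        have "(norm (x t - S))^2 \<le> (b / a) * (norm (x0 - S))^2 * exp (- c * t)" by (rule normb[OF x d1 t])
        also have "\<dots> = (C * exp (- (c / 2) * t))^2"
        proof -
          have e2: "(exp (- (c / 2) * t))^2 = exp (- c * t)"
            by (simp add: power2_eq_square exp_add[symmetric])
          have C2: "C^2 = (b / a) * (norm (x0 - S))^2"
            unfolding C_def using a b by (simp add: real_sqrt_pow2)
          show ?thesis by (simp only: power_mult_distrib e2 C2)
        qed
        finally have "(norm (x t - S))^2 \<le> (C * exp (- (c / 2) * t))^2" .
        moreover have "C * exp (- (c / 2) * t) \<ge> 0" unfolding C_def using a b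
          by (intro mult_nonneg_nonneg real_sqrt_ge_zero divide_nonneg_pos) auto
        ultimately show "norm (x t - S) \<le> C * exp (- (c / 2) * t)" by (rule power2_le_imp_le)
      qed
      have "((\<lambda>t. x t - S) \<longlongrightarrow> 0) at_top"
        by (rule Lim_null_comparison[OF ev lim0])
      then show "(x \<longlongrightarrow> S) at_top" by (simp add: LIM_zero_iff)
    qed
  qed
qed

lemma hurwitz_W:
  fixes q1 q2 q3 q4 :: real
  assumes q1: "q1 > 0" and q3: "q3 > 0" and q4: "q4 > 0" and D: "q1*q2*q3 - q1^2*q4 - q3^2 > 0"
  obtains b2 b3 b4 s where "b2 > 0" "b3 > 0" "b4 > 0" "s = b3 + b4" "q2 = b2 + s" "q3 = q1 * s" "q4 = b2*b4"
proof -
  define s where "s = q3 / q1"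
  define b2 where "b2 = q2 - s"
  define b4 where "b4 = q4 / b2"
  define b3 where "b3 = s - b4"
  have "q3 * (q1*q2 - q3) > q1^2 * q4" using D by (simp add: algebra_simps power2_eq_square)
  moreover have "q1^2 * q4 > 0" using q1 q4 by simp
  ultimately have "q3 * (q1*q2 - q3) > 0" by linarith
  then have P: "q1*q2 - q3 > 0" using q3 by (simp add: zero_less_mult_iff)
  have b2: "b2 = (q1*q2 - q3) / q1" unfolding b2_def s_def using q1 by (simp add: field_simps)
  have b2p: "b2 > 0" unfolding b2 using P q1 by simp
  have b4p: "b4 > 0" unfolding b4_def using b2p q4 by simp
  have "b3 = (q1*q2*q3 - q1^2*q4 - q3^2) / (q1 * (q1*q2 - q3))"
    unfolding b3_def b4_def b2 s_def using q1 P by (simp add: field_simps power2_eq_square)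
  then have b3p: "b3 > 0" using D q1 P by simp
  show ?thesis
  proof (rule that[OF b2p b3p b4p])
    show "s = b3 + b4" unfolding b3_def by simp
    show "q2 = b2 + s" unfolding b2_def by simp
    show "q3 = q1 * s" unfolding s_def using q1 by simp
    show "q4 = b2 * b4" unfolding b4_def using b2p by simp
  qed
qed

lemma W_lie:
  fixes z1 z2 z3 z4 :: real
  assumes "s = b3 + b4" "q2 = b2 + s" "q3 = q1 * s" "q4 = b2*b4"
  shows "2*(b2*b3*b4)*z1*z2 + 2*(b2*b3)*z2*z3 + 2*b2*(z3+b4*z1)*(z4+b4*z2)
     + 2*1*(z4+ s * z2)*(-(q1*z4+q2*z3+q3*z2+q4*z1) + s*z3) = -2*q1*(z4+ s * z2)^2"
  unfolding assms by (simp add: algebra_simps power2_eq_square)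

lemma quadform_deriv:
  fixes l :: "'j \<Rightarrow> 'a::real_normed_vector \<Rightarrow> real"
  assumes "finite J" "\<And>j. j \<in> J \<Longrightarrow> bounded_linear (l j)"
  shows "((\<lambda>y. \<Sum>j\<in>J. w j * (l j y)^2) has_derivative (\<lambda>h. \<Sum>j\<in>J. 2 * w j * l j y * l j h)) (at y)"
proof -
  have "((\<lambda>y. w j * (l j y)^2) has_derivative (\<lambda>h. 2 * w j * l j y * l j h)) (at y)" if "j \<in> J" for j
  proof -
    have "(l j has_derivative l j) (at y)" using assms(2)[OF that] by (rule bounded_linear.has_derivative[OF _ has_derivative_ident])
    then show ?thesis
      by (auto intro!: derivative_eq_intros simp: power2_eq_square algebra_simps)
  qed
  then show ?thesis by (intro has_derivative_sum) auto
qed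

lemma quadform_bound:
  fixes l :: "'j \<Rightarrow> 'a::real_normed_vector \<Rightarrow> real"
  assumes "finite J" "\<And>j. j \<in> J \<Longrightarrow> bounded_linear (l j)"
  obtains K where "K > 0" "\<And>y h. \<bar>\<Sum>j\<in>J. 2 * w j * l j y * l j h\<bar> \<le> K * norm y * norm h"
proof -
  have "\<forall>j\<in>J. \<exists>K. K \<ge> 0 \<and> (\<forall>x. \<bar>l j x\<bar> \<le> norm x * K)"
    using assms(2) bounded_linear.nonneg_bounded by fastforce
  then obtain Kf where Kf: "\<And>j. j \<in> J \<Longrightarrow> Kf j \<ge> 0 \<and> (\<forall>x. \<bar>l j x\<bar> \<le> norm x * Kf j)"
    by metis
  define K where "K = (\<Sum>j\<in>J. 2 * \<bar>w j\<bar> * (Kf j)^2) + 1"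
  have K0: "(\<Sum>j\<in>J. 2 * \<bar>w j\<bar> * (Kf j)^2) \<ge> 0" by (intro sum_nonneg) auto
  show ?thesis
  proof (rule that)
    show "K > 0" unfolding K_def using K0 by linarith
    fix y h :: 'a
    have "\<bar>\<Sum>j\<in>J. 2 * w j * l j y * l j h\<bar> \<le> (\<Sum>j\<in>J. \<bar>2 * w j * l j y * l j h\<bar>)"
      by (rule sum_abs)
    also have "\<dots> \<le> (\<Sum>j\<in>J. 2 * \<bar>w j\<bar> * (Kf j)^2 * (norm y * norm h))"
    proof (rule sum_mono)
      fix j assume j: "j \<in> J"
      have "\<bar>l j y\<bar> * \<bar>l j h\<bar> \<le> (norm y * Kf j) * (norm h * Kf j)"
        using Kf[OF j] by (intro mult_mono) auto
      then have "2 * \<bar>w j\<bar> * (\<bar>l j y\<bar> * \<bar>l j h\<bar>) \<le> 2 * \<bar>w j\<bar> * ((norm y * Kf j) * (norm h * Kf j))"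
        by (intro mult_left_mono) auto
      then show "\<bar>2 * w j * l j y * l j h\<bar> \<le> 2 * \<bar>w j\<bar> * (Kf j)^2 * (norm y * norm h)"
        by (simp add: abs_mult power2_eq_square algebra_simps)
    qed
    also have "\<dots> = (\<Sum>j\<in>J. 2 * \<bar>w j\<bar> * (Kf j)^2) * (norm y * norm h)"
      by (simp add: sum_distrib_right)
    also have "\<dots> \<le> K * (norm y * norm h)"
      unfolding K_def by (intro mult_right_mono) auto
    finally show "\<bar>\<Sum>j\<in>J. 2 * w j * l j y * l j h\<bar> \<le> K * norm y * norm h" by (simp add: mult.assoc)
  qed
qed

definition cmp :: "nat \<Rightarrow> state4 \<Rightarrow> real" where
  "cmp i y = (if i = 0 then fst y else if i = 1 then fst (snd y) else if i = 2 then fst (snd (snd y)) else snd (snd (snd y)))"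

lemma bl_comp: "bounded_linear (cmp i)"
proof -
  have b1: "bounded_linear (\<lambda>y::state4. fst y)" by (rule bounded_linear_fst)
  have b2: "bounded_linear (\<lambda>y::state4. fst (snd y))"
    by (rule bounded_linear_compose[OF bounded_linear_fst bounded_linear_snd])
  have b3: "bounded_linear (\<lambda>y::state4. fst (snd (snd y)))"
    by (rule bounded_linear_compose[OF bounded_linear_fst bounded_linear_compose[OF bounded_linear_snd bounded_linear_snd]])
  have b4: "bounded_linear (\<lambda>y::state4. snd (snd (snd y)))"
    by (rule bounded_linear_compose[OF bounded_linear_snd bounded_linear_compose[OF bounded_linear_snd bounded_linear_snd]])
  have e: "cmp i = (if i = 0 then (\<lambda>y. fst y) else if i = 1 then (\<lambda>y. fst (snd y)) else if i = 2 then (\<lambda>y. fst (snd (snd y))) else (\<lambda>y. snd (snd (snd y))))"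
    by (auto simp: cmp_def fun_eq_iff)
  show ?thesis unfolding e using b1 b2 b3 b4 by simp
qed

lemma comp_add: "cmp i (u + v) = cmp i u + cmp i v" by (simp add: cmp_def)
lemma comp_scale: "cmp i (r *\<^sub>R u) = r * cmp i u" by (simp add: cmp_def)
lemma comp_zero: "cmp i 0 = 0" by (simp add: cmp_def)

lemma norm_comp: "(norm y)^2 = (\<Sum>i<4. (cmp i y)^2)"
proof -
  obtain a b c d where y: "y = (a, b, c, d)" by (cases y) auto
  show ?thesis unfolding y
    by (simp add: norm_Pair cmp_def numeral_eq_Suc lessThan_Suc)
qed

definition lf :: "(state4 \<Rightarrow> state4) \<Rightarrow> real \<Rightarrow> real \<Rightarrow> nat \<times> nat \<Rightarrow> state4 \<Rightarrow> real" where
  "lf M b4 s j y = (case j of (i, k) \<Rightarrow>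
     if k = 0 then cmp i y else if k = 1 then cmp i (M y)
     else if k = 2 then cmp i (M (M y)) + b4 * cmp i y
     else cmp i (M (M (M y))) + s * cmp i (M y))"

definition wt :: "real \<Rightarrow> real \<Rightarrow> real \<Rightarrow> nat \<times> nat \<Rightarrow> real" where
  "wt b2 b3 b4 j = (case j of (i, k) \<Rightarrow> if k = 0 then b2*b3*b4 else if k = 1 then b2*b3 else if k = 2 then b2 else 1)"

definition JJ :: "(nat \<times> nat) set" where "JJ = {..<4} \<times> {..<4}"

lemma finite_JJ: "finite JJ" by (simp add: JJ_def)

lemma bl_lf: assumes M: "bounded_linear M" shows "bounded_linear (lf M b4 s j)"
proof -
  obtain i k where j: "j = (i, k)" by (cases j) auto
  have c0: "bounded_linear (\<lambda>y. cmp i y)" by (rule bl_comp)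
  have c1: "bounded_linear (\<lambda>y. cmp i (M y))" by (rule bounded_linear_compose[OF bl_comp M])
  have c2: "bounded_linear (\<lambda>y. cmp i (M (M y)))"
    by (rule bounded_linear_compose[OF c1 M])
  have c3: "bounded_linear (\<lambda>y. cmp i (M (M (M y))))"
    by (rule bounded_linear_compose[OF c2 M])
  have "bounded_linear (\<lambda>y. cmp i (M (M y)) + b4 * cmp i y)"
    by (intro bounded_linear_add c2 bounded_linear_const_mult c0)
  moreover have "bounded_linear (\<lambda>y. cmp i (M (M (M y))) + s * cmp i (M y))"
    by (intro bounded_linear_add c3 bounded_linear_const_mult c1)
  moreover have "lf M b4 s j = (if k = 0 then (\<lambda>y. cmp i y) else if k = 1 then (\<lambda>y. cmp i (M y))
     else if k = 2 then (\<lambda>y. cmp i (M (M y)) + b4 * cmp i y)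
     else (\<lambda>y. cmp i (M (M (M y))) + s * cmp i (M y)))"
    by (auto simp: lf_def j fun_eq_iff)
  ultimately show ?thesis using c0 c1 by simp
qed

lemma sum_JJ: "(\<Sum>j\<in>JJ. g j) = (\<Sum>i<4. g (i,0) + g (i,1) + g (i,2) + g (i,3))"
proof -
  have "(\<Sum>j\<in>JJ. g j) = (\<Sum>i<4. \<Sum>k<4. g (i, k))"
    unfolding JJ_def by (simp add: sum.cartesian_product)
  also have "\<dots> = (\<Sum>i<4. g (i,0) + g (i,1) + g (i,2) + g (i,3))"
    by (simp add: numeral_eq_Suc lessThan_Suc ac_simps)
  finally show ?thesis .
qed

lemma V_props:
  fixes M :: "state4 \<Rightarrow> state4"
  assumes M: "bounded_linear M"
    and CH: "\<And>y. M (M (M (M y))) + q1 *\<^sub>R M (M (M y)) + q2 *\<^sub>R M (M y) + q3 *\<^sub>R M y + q4 *\<^sub>R y = 0"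
    and b: "b2 > 0" "b3 > 0" "b4 > 0" and q1: "q1 > 0"
    and rel: "s = b3 + b4" "q2 = b2 + s" "q3 = q1 * s" "q4 = b2 * b4"
  shows "(\<Sum>j\<in>JJ. 2 * wt b2 b3 b4 j * lf M b4 s j y * lf M b4 s j (M y)) \<le> 0"
    and "(\<Sum>j\<in>JJ. wt b2 b3 b4 j * (lf M b4 s j y)^2) \<ge> (b2*b3*b4) * (norm y)^2"
    and "(\<Sum>j\<in>JJ. 2 * wt b2 b3 b4 j * lf M b4 s j y * lf M b4 s j y) = 2 * (\<Sum>j\<in>JJ. wt b2 b3 b4 j * (lf M b4 s j y)^2)"
proof -
  have lin: "linear M" using M bounded_linear.linear by blast
  have M4: "cmp i (M (M (M (M y)))) = - (q1 * cmp i (M (M (M y))) + q2 * cmp i (M (M y)) + q3 * cmp i (M y) + q4 * cmp i y)" for i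
  proof -
    have "cmp i (M (M (M (M y))) + q1 *\<^sub>R M (M (M y)) + q2 *\<^sub>R M (M y) + q3 *\<^sub>R M y + q4 *\<^sub>R y) = 0"
      by (simp add: CH comp_zero)
    then show ?thesis by (simp add: comp_add comp_scale algebra_simps)
  qed
  have MM: "M (M y) = M (M y)" by simp
  show "(\<Sum>j\<in>JJ. 2 * wt b2 b3 b4 j * lf M b4 s j y * lf M b4 s j (M y)) \<le> 0"
  proof -
    have "(\<Sum>j\<in>JJ. 2 * wt b2 b3 b4 j * lf M b4 s j y * lf M b4 s j (M y))
      = (\<Sum>i<4. -2 * q1 * (cmp i (M (M (M y))) + s * cmp i (M y))^2)"
      unfolding sum_JJ
    proof (rule sum.cong[OF refl])
      fix i :: nat
      show "2 * wt b2 b3 b4 (i, 0) * lf M b4 s (i, 0) y * lf M b4 s (i, 0) (M y) +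
          2 * wt b2 b3 b4 (i, 1) * lf M b4 s (i, 1) y * lf M b4 s (i, 1) (M y) +
          2 * wt b2 b3 b4 (i, 2) * lf M b4 s (i, 2) y * lf M b4 s (i, 2) (M y) +
          2 * wt b2 b3 b4 (i, 3) * lf M b4 s (i, 3) y * lf M b4 s (i, 3) (M y) =
          -2 * q1 * (cmp i (M (M (M y))) + s * cmp i (M y))^2"
        unfolding wt_def lf_def using W_lie[OF rel, of "cmp i y" "cmp i (M y)" "cmp i (M (M y))" "cmp i (M (M (M y)))"]
        by (simp add: M4 algebra_simps)
    qed
    also have "\<dots> \<le> 0" using q1 by (intro sum_nonpos) (simp add: mult_nonpos_nonneg)
    finally show ?thesis .
  qed
  show "(\<Sum>j\<in>JJ. wt b2 b3 b4 j * (lf M b4 s j y)^2) \<ge> (b2*b3*b4) * (norm y)^2"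
  proof -
    have "(b2*b3*b4) * (norm y)^2 = (\<Sum>i<4. (b2*b3*b4) * (cmp i y)^2)"
      by (simp add: norm_comp sum_distrib_left)
    also have "\<dots> \<le> (\<Sum>j\<in>JJ. wt b2 b3 b4 j * (lf M b4 s j y)^2)"
      unfolding sum_JJ
    proof (rule sum_mono)
      fix i :: nat
      have "0 \<le> wt b2 b3 b4 (i, 1) * (lf M b4 s (i, 1) y)^2"
        "0 \<le> wt b2 b3 b4 (i, 2) * (lf M b4 s (i, 2) y)^2"
        "0 \<le> wt b2 b3 b4 (i, 3) * (lf M b4 s (i, 3) y)^2"
        using b by (auto simp: wt_def)
      moreover have "wt b2 b3 b4 (i, 0) * (lf M b4 s (i, 0) y)^2 = (b2*b3*b4) * (cmp i y)^2"
        by (simp add: wt_def lf_def)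
      ultimately show "(b2*b3*b4) * (cmp i y)^2 \<le> wt b2 b3 b4 (i, 0) * (lf M b4 s (i, 0) y)^2 +
          wt b2 b3 b4 (i, 1) * (lf M b4 s (i, 1) y)^2 + wt b2 b3 b4 (i, 2) * (lf M b4 s (i, 2) y)^2 +
          wt b2 b3 b4 (i, 3) * (lf M b4 s (i, 3) y)^2" by linarith
    qed
    finally show ?thesis .
  qed
  show "(\<Sum>j\<in>JJ. 2 * wt b2 b3 b4 j * lf M b4 s j y * lf M b4 s j y) = 2 * (\<Sum>j\<in>JJ. wt b2 b3 b4 j * (lf M b4 s j y)^2)"
    by (simp add: sum_distrib_left power2_eq_square algebra_simps)
qed

lemma Zabs:
  fixes x t p q S mb N a :: real
  assumes "t > 0" "q > 0" "S > 0" "x * p + t * q = S"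
  shows "- (mb * (N * a * (p / q)) / (t * ((1 + x * p / (t * q)) * (1 + x * p / (t * q)))))
     = - (mb * N * p * (t * q) / S ^ 2) * a"
proof -
  have e: "1 + x * p / (t * q) = S / (t * q)" using assms by (simp add: field_simps)
  show ?thesis unfolding e using assms by (simp add: field_simps power2_eq_square)
qed

lemma XYabs:
  fixes x y A B p q r s ma N1 N2 a b D :: real
  assumes "A > 0" "B > 0" "r > 0" "s > 0" "D > 0"
    "(x * p) * (B * s) + (y * q) * (A * r) + (B * s) * (A * r) = D"
  shows "(ma * (N1 * a * (p / r)) * (1 + x * p / (A * r) + y * q / (B * s)) / A -
      ma * (x * p / (A * r)) * (N1 * a * (p / r) / A + N2 * b * (q / s) / B)) /
     ((1 + x * p / (A * r) + y * q / (B * s)) * (1 + x * p / (A * r) + y * q / (B * s)))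
   = (ma * N1 * p * (B * s) * (A * r) * (y * q + B * s) / D ^ 2) * a
   + (- (ma * N2 * (x * p) * q * (B * s) * (A * r) / D ^ 2)) * b"
proof -
  have e: "1 + x * p / (A * r) + y * q / (B * s) = D / ((A * r) * (B * s))"
    using assms by (simp add: field_simps)
  have nz: "A \<noteq> 0" "B \<noteq> 0" "r \<noteq> 0" "s \<noteq> 0" "D \<noteq> 0" using assms by auto
  show ?thesis unfolding e using nz
    apply (simp add: divide_simps power2_eq_square)
    apply (simp add: algebra_simps flip: assms(6))
    done
qed

lemma Zid:
  fixes pa tha mb a Z :: real
  assumes "pa > 0" "tha > 0" "na = Suc n"
    and Zd: "Z = - (mb * real na * pa ^ (na - 1) * tha ^ na / (pa ^ na + tha ^ na) ^ 2)"
  shows "- (mb * (real na * a * (pa / tha) ^ (na - Suc 0)) / (tha * ((1 + (pa / tha) ^ na) * (1 + (pa / tha) ^ na)))) = Z * a"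
proof -
  have S: "pa * pa ^ n + tha * tha ^ n > 0" using assms by (intro add_pos_pos) auto
  have S2: "tha ^ n > 0" using assms by simp
  show ?thesis unfolding Zd assms(3)
    apply (simp only: power_divide)
    apply (simp only: power_Suc diff_Suc_Suc diff_zero diff_Suc_1 add.commute[of "pa * pa ^ n"])
    apply (rule Zabs)
    using assms S S2 by (auto simp: add.commute)
qed

lemma XYid:
  fixes pa pb thaa thb ma a b X Y :: real
  assumes "pa > 0" "pb > 0" "thaa > 0" "thb > 0" "naa = Suc m" "nb = Suc k"
    and Xd: "X = ma * real naa * pa ^ (naa - 1) * thb ^ nb * thaa ^ naa * (pb ^ nb + thb ^ nb) / (pa ^ naa * thb ^ nb + pb ^ nb * thaa ^ naa + thb ^ nb * thaa ^ naa) ^ 2"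
    and Yd: "Y = - (ma * real nb * pa ^ naa * pb ^ (nb - 1) * thb ^ nb * thaa ^ naa / (pa ^ naa * thb ^ nb + pb ^ nb * thaa ^ naa + thb ^ nb * thaa ^ naa) ^ 2)"
  shows "(ma * (real naa * a * (pa / thaa) ^ (naa - Suc 0)) * (1 + (pa / thaa) ^ naa + (pb / thb) ^ nb) / thaa -
      ma * (pa / thaa) ^ naa * (real naa * a * (pa / thaa) ^ (naa - Suc 0) / thaa + real nb * b * (pb / thb) ^ (nb - Suc 0) / thb)) /
     ((1 + (pa / thaa) ^ naa + (pb / thb) ^ nb) * (1 + (pa / thaa) ^ naa + (pb / thb) ^ nb)) = X * a + Y * b"
proof -
  have D: "pa * pa ^ m * (thb * thb ^ k) + pb * pb ^ k * (thaa * thaa ^ m) + thb * thb ^ k * (thaa * thaa ^ m) > 0"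
    using assms by (intro add_pos_pos mult_pos_pos) auto
  show ?thesis unfolding Xd Yd assms(5,6)
    apply (simp only: power_divide)
    apply (simp only: power_Suc diff_Suc_Suc diff_zero diff_Suc_1)
    apply (rule XYabs)
    using assms D by auto
qed

definition Amat :: "real \<Rightarrow> real \<Rightarrow> real \<Rightarrow> real \<Rightarrow> real \<Rightarrow> real \<Rightarrow> real \<Rightarrow> real \<Rightarrow> real \<Rightarrow> state4 \<Rightarrow> state4" where
  "Amat g1 g2 d1 d2 ka kb X Y Z = (\<lambda>(u1,u2,u3,u4). (-g1*u1 + X*u3 + Y*u4, -g2*u2 + Z*u3, ka*u1 - d1*u3, kb*u2 - d2*u4))"

lemma CH:
  fixes u1 u2 u3 u4 g1 g2 d1 d2 ka kb X Y Z :: real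
  defines "M \<equiv> Amat g1 g2 d1 d2 ka kb X Y Z"
  shows "M (M (M (M (u1,u2,u3,u4)))) + (g1+g2+d1+d2) *\<^sub>R M (M (M (u1,u2,u3,u4)))
    + (g1*g2 + (g1+g2)*(d1+d2) + d1*d2 - ka*X) *\<^sub>R M (M (u1,u2,u3,u4))
    + (d1*d2*(g1+g2) + (d1+d2)*g1*g2 - ka*(d2+g2)*X) *\<^sub>R M (u1,u2,u3,u4)
    + (g1*g2*d1*d2 - ka*kb*Y*Z - ka*g2*d2*X) *\<^sub>R (u1,u2,u3,u4) = 0"
  unfolding M_def Amat_def
  by (simp add: algebra_simps zero_prod_def)

lemma grn_alt: "grn_field ma mb ga gb ka kb da db tha thb thaa A1 B1 na nb naa =
  (\<lambda>w. (ma * (fst (snd (snd w)) / thaa) ^ naa / (1 + (fst (snd (snd w)) / thaa) ^ naa + (snd (snd (snd w)) / thb) ^ nb) - ga * fst w + A1,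
        mb / (1 + (fst (snd (snd w)) / tha) ^ na) - gb * fst (snd w) + B1,
        ka * fst w - da * fst (snd (snd w)),
        kb * fst (snd w) - db * snd (snd (snd w))))"
  by (auto simp: grn_field_def fun_eq_iff split: prod.splits)

lemma deriv_grn:
  assumes pos: "pa > 0" "pb > 0" "tha > 0" "thb > 0" "thaa > 0"
  and npos: "na \<ge> 1" "nb \<ge> 1" "naa \<ge> 1"
  and Xd: "X = ma * real naa * pa ^ (naa - 1) * thb ^ nb * thaa ^ naa * (pb ^ nb + thb ^ nb) / (pa ^ naa * thb ^ nb + pb ^ nb * thaa ^ naa + thb ^ nb * thaa ^ naa) ^ 2"
  and Yd: "Y = - (ma * real nb * pa ^ naa * pb ^ (nb - 1) * thb ^ nb * thaa ^ naa / (pa ^ naa * thb ^ nb + pb ^ nb * thaa ^ naa + thb ^ nb * thaa ^ naa) ^ 2)"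
  and Zd: "Z = - (mb * real na * pa ^ (na - 1) * tha ^ na / (pa ^ na + tha ^ na) ^ 2)"
  shows "(grn_field ma mb ga gb ka kb da db tha thb thaa A1 B1 na nb naa has_derivative Amat ga gb da db ka kb X Y Z) (at (ra,rb,pa,pb))"
proof -
  obtain n where n: "na = Suc n" using npos(1) by (cases na) auto
  obtain k where k: "nb = Suc k" using npos(2) by (cases nb) auto
  obtain m where m: "naa = Suc m" using npos(3) by (cases naa) auto
  have p1: "1 + (pa / thaa) ^ naa + (pb / thb) ^ nb > 0" using pos by (intro add_pos_nonneg) auto
  have p2: "1 + (pa / tha) ^ na > 0" using pos by (intro add_pos_nonneg) auto
  show ?thesis
  unfolding grn_alt
  apply (rule has_derivative_eq_rhs)
   apply (auto intro!: derivative_eq_intros simp: pos)[1]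
  using pos p1 p2 XYid[OF pos(1,2,5,4) m k Xd Yd] Zid[OF pos(1,3) n Zd]
    apply (auto simp: Amat_def fun_eq_iff split: prod.splits)
  done
qed

lemma abs_lin2:
  fixes a b x y :: real
  assumes "a \<ge> 0" "b \<ge> 0"
  shows "\<bar>a * x + b * y\<bar> \<le> a * \<bar>x\<bar> + b * \<bar>y\<bar>"
proof -
  have "\<bar>a * x + b * y\<bar> \<le> \<bar>a * x\<bar> + \<bar>b * y\<bar>" by (rule abs_triangle_ineq)
  also have "\<dots> = a * \<bar>x\<bar> + b * \<bar>y\<bar>" using assms by (simp add: abs_mult)
  finally show ?thesis .
qed

lemma phi_lip:
  fixes U V U' V' :: real
  assumes "U \<ge> 0" "V \<ge> 0" "U' \<ge> 0" "V' \<ge> 0"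
  shows "\<bar>U / (1 + U + V) - U' / (1 + U' + V')\<bar> \<le> \<bar>U - U'\<bar> + \<bar>V - V'\<bar>"
proof -
  define d1 where "d1 = 1 + U + V"
  define d2 where "d2 = 1 + U' + V'"
  have d1: "d1 \<ge> 1" and d2: "d2 \<ge> 1" using assms by (auto simp: d1_def d2_def)
  define X where "X = \<bar>U - U'\<bar> + \<bar>V - V'\<bar>"
  have X: "X \<ge> 0" unfolding X_def by simp
  have "U * d2 - U' * d1 = (U - U') * (1 + V') + U' * (V' - V)"
    unfolding d1_def d2_def by (simp add: algebra_simps)
  moreover have "U / d1 - U' / d2 = (U * d2 - U' * d1) / (d1 * d2)"
    using d1 d2 by (simp add: diff_frac_eq)
  ultimately have eq: "U / d1 - U' / d2 = ((U - U') * (1 + V') + U' * (V' - V)) / (d1 * d2)" by simp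
  have "\<bar>(U - U') * (1 + V') + U' * (V' - V)\<bar> \<le> (1 + V') * \<bar>U - U'\<bar> + U' * \<bar>V' - V\<bar>"
    using abs_lin2[of "1 + V'" U' "U - U'" "V' - V"] assms by (simp add: mult.commute)
  also have "\<dots> \<le> d2 * \<bar>U - U'\<bar> + d2 * \<bar>V - V'\<bar>"
  proof (rule add_mono)
    show "(1 + V') * \<bar>U - U'\<bar> \<le> d2 * \<bar>U - U'\<bar>" by (rule mult_right_mono) (use assms in \<open>auto simp: d2_def\<close>)
    have "U' * \<bar>V - V'\<bar> \<le> d2 * \<bar>V - V'\<bar>" by (rule mult_right_mono) (use assms in \<open>auto simp: d2_def\<close>)
    then show "U' * \<bar>V' - V\<bar> \<le> d2 * \<bar>V - V'\<bar>" by (simp add: abs_minus_commute)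
  qed
  also have "\<dots> = d2 * X" unfolding X_def by (simp add: algebra_simps)
  also have "\<dots> \<le> (d1 * d2) * X"
  proof -
    have "d2 \<le> d1 * d2" using d1 d2 by (simp add: mult_le_cancel_right1)
    then show ?thesis using X by (rule mult_right_mono)
  qed
  finally have n: "\<bar>(U - U') * (1 + V') + U' * (V' - V)\<bar> \<le> (d1 * d2) * X" .
  have dd: "d1 * d2 > 0" using d1 d2 by simp
  have "\<bar>U / d1 - U' / d2\<bar> = \<bar>(U - U') * (1 + V') + U' * (V' - V)\<bar> / (d1 * d2)"
    unfolding eq using dd by (simp add: abs_divide)
  also have "\<dots> \<le> X" using n dd by (simp add: divide_le_eq mult.commute)
  finally show ?thesis unfolding d1_def d2_def X_def .
qed

lemma psi_lip:
  fixes W W' :: real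
  assumes "W \<ge> 0" "W' \<ge> 0"
  shows "\<bar>1 / (1 + W) - 1 / (1 + W')\<bar> \<le> \<bar>W - W'\<bar>"
proof -
  have eq: "1 / (1 + W) - 1 / (1 + W') = (W' - W) / ((1 + W) * (1 + W'))"
    using assms by (simp add: diff_frac_eq)
  have "(1 + W) * (1 + W') = 1 + (W + W' + W * W')" by (simp add: algebra_simps)
  moreover have "W * W' \<ge> 0" using assms by simp
  ultimately have dd: "(1 + W) * (1 + W') \<ge> 1" using assms by linarith
  have "\<bar>W' - W\<bar> \<le> \<bar>W' - W\<bar> * ((1 + W) * (1 + W'))" using dd by (simp add: mult_le_cancel_left1)
  then show ?thesis unfolding eq using dd by (simp add: abs_divide divide_le_eq abs_minus_commute)
qed

lemma pow_lip:
  fixes x y R :: real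
  assumes "0 \<le> x" "x \<le> R" "0 \<le> y" "y \<le> R"
  shows "\<bar>x ^ n - y ^ n\<bar> \<le> real n * R ^ (n - 1) * \<bar>x - y\<bar>"
proof -
  have S0: "(\<Sum>i<n. y ^ (n - Suc i) * x ^ i) \<ge> 0" using assms by (intro sum_nonneg) auto
  have "(\<Sum>i<n. y ^ (n - Suc i) * x ^ i) \<le> (\<Sum>i<n. R ^ (n - 1))"
  proof (rule sum_mono)
    fix i assume i: "i \<in> {..<n}"
    have "y ^ (n - Suc i) * x ^ i \<le> R ^ (n - Suc i) * R ^ i"
      using assms by (intro mult_mono power_mono) auto
    also have "\<dots> = R ^ (n - 1)" using i by (simp add: power_add[symmetric])
    finally show "y ^ (n - Suc i) * x ^ i \<le> R ^ (n - 1)" .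
  qed
  then have S1: "(\<Sum>i<n. y ^ (n - Suc i) * x ^ i) \<le> real n * R ^ (n - 1)" by simp
  have "\<bar>x ^ n - y ^ n\<bar> = \<bar>x - y\<bar> * (\<Sum>i<n. y ^ (n - Suc i) * x ^ i)"
    by (simp add: power_diff_sumr2 abs_mult S0)
  also have "\<dots> \<le> \<bar>x - y\<bar> * (real n * R ^ (n - 1))" using S1 by (intro mult_left_mono) auto
  finally show ?thesis by (simp add: algebra_simps)
qed

definition cl :: "real \<Rightarrow> real \<Rightarrow> real" where "cl R p = max 0 (min R p)"

lemma cl_lip: "\<bar>cl R p - cl R q\<bar> \<le> \<bar>p - q\<bar>" unfolding cl_def by linarith
lemma cl_bounds: "R \<ge> 0 \<Longrightarrow> 0 \<le> cl R p \<and> cl R p \<le> R" unfolding cl_def by linarith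
lemma cl_id: "0 \<le> p \<Longrightarrow> p \<le> R \<Longrightarrow> cl R p = p" unfolding cl_def by linarith

definition clampS :: "real \<Rightarrow> state4 \<Rightarrow> state4" where
  "clampS R w = (fst w, fst (snd w), cl R (fst (snd (snd w))), cl R (snd (snd (snd w))))"

lemma norm4_le: "norm ((a, b, c, d) :: state4) \<le> \<bar>a\<bar> + \<bar>b\<bar> + \<bar>c\<bar> + \<bar>d\<bar>"
proof -
  have "norm ((a, b, c, d) :: state4) \<le> norm a + norm (b, c, d)" by (rule norm_Pair_le)
  also have "norm (b, c, d) \<le> norm b + norm (c, d)" by (rule norm_Pair_le)
  also have "norm (c, d) \<le> norm c + norm d" by (rule norm_Pair_le)
  finally show ?thesis by simp
qed

lemma comp_le:
  fixes u :: state4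
  shows "\<bar>fst u\<bar> \<le> norm u" "\<bar>fst (snd u)\<bar> \<le> norm u" "\<bar>fst (snd (snd u))\<bar> \<le> norm u" "\<bar>snd (snd (snd u))\<bar> \<le> norm u"
proof -
  obtain a b c d where u: "u = (a, b, c, d)" by (cases u) auto
  have "norm a \<le> norm u" "norm (b, c, d) \<le> norm u" unfolding u by (rule norm_fst_le, rule norm_snd_le)
  moreover have "norm b \<le> norm (b, c, d)" "norm (c, d) \<le> norm (b, c, d)" by (rule norm_fst_le, rule norm_snd_le)
  moreover have "norm c \<le> norm (c, d)" "norm d \<le> norm (c, d)" by (rule norm_fst_le, rule norm_snd_le)
  ultimately show "\<bar>fst u\<bar> \<le> norm u" "\<bar>fst (snd u)\<bar> \<le> norm u" "\<bar>fst (snd (snd u))\<bar> \<le> norm u" "\<bar>snd (snd (snd u))\<bar> \<le> norm u"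
    unfolding u by auto
qed

lemma grn_lip:
  assumes pos: "ma > 0" "mb > 0" "ga > 0" "gb > 0" "ka > 0" "kb > 0" "da > 0" "db > 0"
      "tha > 0" "thb > 0" "thaa > 0" and R: "R \<ge> 0"
  obtains L where "L > 0"
    "\<And>u v. norm (grn_field ma mb ga gb ka kb da db tha thb thaa A1 B1 na nb naa (clampS R u)
          - grn_field ma mb ga gb ka kb da db tha thb thaa A1 B1 na nb naa (clampS R v)) \<le> L * norm (u - v)"
proof -
  define K1 where "K1 = real naa * (R / thaa) ^ (naa - 1) / thaa"
  define K2 where "K2 = real nb * (R / thb) ^ (nb - 1) / thb"
  define K3 where "K3 = real na * (R / tha) ^ (na - 1) / tha"
  have K: "K1 \<ge> 0" "K2 \<ge> 0" "K3 \<ge> 0" using pos R by (auto simp: K1_def K2_def K3_def)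
  have plip: "\<bar>(x / th) ^ n - (y / th) ^ n\<bar> \<le> real n * (R / th) ^ (n - 1) / th * \<bar>x - y\<bar>"
    if "th > 0" "0 \<le> x" "x \<le> R" "0 \<le> y" "y \<le> R" for x y th :: real and n :: nat
  proof -
    have "\<bar>(x / th) ^ n - (y / th) ^ n\<bar> \<le> real n * (R / th) ^ (n - 1) * \<bar>x / th - y / th\<bar>"
      using that by (intro pow_lip) (auto simp: divide_right_mono)
    also have "\<bar>x / th - y / th\<bar> = \<bar>x - y\<bar> / th" using that by (simp add: diff_divide_distrib[symmetric])
    finally show ?thesis by simp
  qed
  define L where "L = ma * (K1 + K2) + ga + mb * K3 + gb + ka + da + kb + db"
  show ?thesis
  proof (rule that)
    have "ma * (K1 + K2) \<ge> 0" "mb * K3 \<ge> 0" using pos K by simp_all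
    then show "L > 0" unfolding L_def using pos by linarith
    fix u v :: state4
    obtain u1 u2 u3 u4 where u: "u = (u1, u2, u3, u4)" by (cases u) auto
    obtain v1 v2 v3 v4 where v: "v = (v1, v2, v3, v4)" by (cases v) auto
    define d where "d = norm (u - v)"
    have d1: "\<bar>u1 - v1\<bar> \<le> d" "\<bar>u2 - v2\<bar> \<le> d" "\<bar>u3 - v3\<bar> \<le> d" "\<bar>u4 - v4\<bar> \<le> d"
      using comp_le[of "u - v"] unfolding d_def u v by auto
    define p where "p = cl R u3" define q where "q = cl R u4"
    define p' where "p' = cl R v3" define q' where "q' = cl R v4"
    have pb: "0 \<le> p" "p \<le> R" "0 \<le> q" "q \<le> R" "0 \<le> p'" "p' \<le> R" "0 \<le> q'" "q' \<le> R"
      using cl_bounds[OF R] unfolding p_def q_def p'_def q'_def by auto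
    have dp: "\<bar>p - p'\<bar> \<le> d" "\<bar>q - q'\<bar> \<le> d"
      using cl_lip[of R u3 v3] cl_lip[of R u4 v4] d1 unfolding p_def q_def p'_def q'_def by auto
    have c1: "\<bar>ma * (p / thaa) ^ naa / (1 + (p / thaa) ^ naa + (q / thb) ^ nb) - ga * u1 + A1
        - (ma * (p' / thaa) ^ naa / (1 + (p' / thaa) ^ naa + (q' / thb) ^ nb) - ga * v1 + A1)\<bar>
        \<le> ma * (K1 + K2) * d + ga * d"
    proof -
      have "\<bar>(p / thaa) ^ naa / (1 + (p / thaa) ^ naa + (q / thb) ^ nb) - (p' / thaa) ^ naa / (1 + (p' / thaa) ^ naa + (q' / thb) ^ nb)\<bar>
          \<le> \<bar>(p / thaa) ^ naa - (p' / thaa) ^ naa\<bar> + \<bar>(q / thb) ^ nb - (q' / thb) ^ nb\<bar>"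
        using pb pos by (intro phi_lip) auto
      also have "\<dots> \<le> K1 * \<bar>p - p'\<bar> + K2 * \<bar>q - q'\<bar>"
        unfolding K1_def K2_def using pb pos by (intro add_mono plip) auto
      also have "\<dots> \<le> K1 * d + K2 * d" using dp K by (intro add_mono mult_left_mono) auto
      finally have A: "\<bar>(p / thaa) ^ naa / (1 + (p / thaa) ^ naa + (q / thb) ^ nb) - (p' / thaa) ^ naa / (1 + (p' / thaa) ^ naa + (q' / thb) ^ nb)\<bar>
          \<le> (K1 + K2) * d" by (simp add: algebra_simps)
      have e: "ma * (p / thaa) ^ naa / (1 + (p / thaa) ^ naa + (q / thb) ^ nb) - ga * u1 + A1
        - (ma * (p' / thaa) ^ naa / (1 + (p' / thaa) ^ naa + (q' / thb) ^ nb) - ga * v1 + A1)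
        = ma * ((p / thaa) ^ naa / (1 + (p / thaa) ^ naa + (q / thb) ^ nb) - (p' / thaa) ^ naa / (1 + (p' / thaa) ^ naa + (q' / thb) ^ nb))
          + ga * (v1 - u1)" by (simp add: algebra_simps)
      have "\<bar>ma * (p / thaa) ^ naa / (1 + (p / thaa) ^ naa + (q / thb) ^ nb) - ga * u1 + A1
        - (ma * (p' / thaa) ^ naa / (1 + (p' / thaa) ^ naa + (q' / thb) ^ nb) - ga * v1 + A1)\<bar>
        \<le> ma * \<bar>(p / thaa) ^ naa / (1 + (p / thaa) ^ naa + (q / thb) ^ nb) - (p' / thaa) ^ naa / (1 + (p' / thaa) ^ naa + (q' / thb) ^ nb)\<bar>
          + ga * \<bar>u1 - v1\<bar>"
        unfolding e using pos abs_lin2[of ma ga _ "v1 - u1"] abs_minus_commute[of v1 u1] by simp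
      also have "\<dots> \<le> ma * ((K1 + K2) * d) + ga * d" using A d1 pos by (intro add_mono mult_left_mono) auto
      finally show ?thesis by (simp add: algebra_simps)
    qed
    have c2: "\<bar>mb / (1 + (p / tha) ^ na) - gb * u2 + B1 - (mb / (1 + (p' / tha) ^ na) - gb * v2 + B1)\<bar>
        \<le> mb * K3 * d + gb * d"
    proof -
      have "\<bar>1 / (1 + (p / tha) ^ na) - 1 / (1 + (p' / tha) ^ na)\<bar> \<le> \<bar>(p / tha) ^ na - (p' / tha) ^ na\<bar>"
        using pb pos by (intro psi_lip) auto
      also have "\<dots> \<le> K3 * \<bar>p - p'\<bar>" unfolding K3_def using pb pos by (intro plip) auto
      also have "\<dots> \<le> K3 * d" using dp K by (intro mult_left_mono) auto
      finally have A: "\<bar>1 / (1 + (p / tha) ^ na) - 1 / (1 + (p' / tha) ^ na)\<bar> \<le> K3 * d" .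
      have e: "mb / (1 + (p / tha) ^ na) - gb * u2 + B1 - (mb / (1 + (p' / tha) ^ na) - gb * v2 + B1)
          = mb * (1 / (1 + (p / tha) ^ na) - 1 / (1 + (p' / tha) ^ na)) + gb * (v2 - u2)"
        by (simp add: algebra_simps)
      have "\<bar>mb * (1 / (1 + (p / tha) ^ na) - 1 / (1 + (p' / tha) ^ na)) + gb * (v2 - u2)\<bar>
          \<le> mb * \<bar>1 / (1 + (p / tha) ^ na) - 1 / (1 + (p' / tha) ^ na)\<bar> + gb * \<bar>u2 - v2\<bar>"
        using pos abs_lin2[of mb gb "1 / (1 + (p / tha) ^ na) - 1 / (1 + (p' / tha) ^ na)" "v2 - u2"] abs_minus_commute[of v2 u2]
        by simp
      also have "\<dots> \<le> mb * (K3 * d) + gb * d" using A d1 pos by (intro add_mono mult_left_mono) auto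
      finally show ?thesis unfolding e by (simp add: algebra_simps)
    qed
    have c3: "\<bar>ka * u1 - da * p - (ka * v1 - da * p')\<bar> \<le> ka * d + da * d"
    proof -
      have e: "ka * u1 - da * p - (ka * v1 - da * p') = ka * (u1 - v1) + da * (p' - p)" by (simp add: algebra_simps)
      have "\<bar>ka * u1 - da * p - (ka * v1 - da * p')\<bar> \<le> ka * \<bar>u1 - v1\<bar> + da * \<bar>p - p'\<bar>"
        unfolding e using pos abs_lin2[of ka da "u1 - v1" "p' - p"] by (simp add: abs_minus_commute)
      also have "\<dots> \<le> ka * d + da * d" using d1 dp pos by (intro add_mono mult_left_mono) auto
      finally show ?thesis .
    qed
    have c4: "\<bar>kb * u2 - db * q - (kb * v2 - db * q')\<bar> \<le> kb * d + db * d"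
    proof -
      have e: "kb * u2 - db * q - (kb * v2 - db * q') = kb * (u2 - v2) + db * (q' - q)" by (simp add: algebra_simps)
      have "\<bar>kb * u2 - db * q - (kb * v2 - db * q')\<bar> \<le> kb * \<bar>u2 - v2\<bar> + db * \<bar>q - q'\<bar>"
        unfolding e using pos abs_lin2[of kb db "u2 - v2" "q' - q"] by (simp add: abs_minus_commute)
      also have "\<dots> \<le> kb * d + db * d" using d1 dp pos by (intro add_mono mult_left_mono) auto
      finally show ?thesis .
    qed
    have geq: "grn_field ma mb ga gb ka kb da db tha thb thaa A1 B1 na nb naa (clampS R u)
          - grn_field ma mb ga gb ka kb da db tha thb thaa A1 B1 na nb naa (clampS R v)
        = (ma * (p / thaa) ^ naa / (1 + (p / thaa) ^ naa + (q / thb) ^ nb) - ga * u1 + A1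
        - (ma * (p' / thaa) ^ naa / (1 + (p' / thaa) ^ naa + (q' / thb) ^ nb) - ga * v1 + A1),
           mb / (1 + (p / tha) ^ na) - gb * u2 + B1 - (mb / (1 + (p' / tha) ^ na) - gb * v2 + B1),
           ka * u1 - da * p - (ka * v1 - da * p'),
           kb * u2 - db * q - (kb * v2 - db * q'))"
      unfolding u v clampS_def grn_field_def p_def q_def p'_def q'_def by simp
    have "norm (grn_field ma mb ga gb ka kb da db tha thb thaa A1 B1 na nb naa (clampS R u)
          - grn_field ma mb ga gb ka kb da db tha thb thaa A1 B1 na nb naa (clampS R v))
        \<le> (ma * (K1 + K2) * d + ga * d) + (mb * K3 * d + gb * d) + (ka * d + da * d) + (kb * d + db * d)"
      unfolding geq by (rule order_trans[OF norm4_le]) (intro add_mono c1 c2 c3 c4)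
    also have "\<dots> = L * d" unfolding L_def by (simp add: algebra_simps)
    finally show "norm (grn_field ma mb ga gb ka kb da db tha thb thaa A1 B1 na nb naa (clampS R u)
          - grn_field ma mb ga gb ka kb da db tha thb thaa A1 B1 na nb naa (clampS R v)) \<le> L * norm (u - v)"
      unfolding d_def .
  qed
qed

lemma Amat_shift:
  "Amat (g1 - \<sigma>) (g2 - \<sigma>) (d1 - \<sigma>) (d2 - \<sigma>) ka kb X Y Z y = Amat g1 g2 d1 d2 ka kb X Y Z y + \<sigma> *\<^sub>R y"
  by (cases y) (simp add: Amat_def algebra_simps)

lemma Amat_bl: "bounded_linear (Amat g1 g2 d1 d2 ka kb X Y Z)"
proof -
  have "linear (Amat g1 g2 d1 d2 ka kb X Y Z)"
  proof (rule linearI)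
    fix x y :: state4 and c :: real
    show "Amat g1 g2 d1 d2 ka kb X Y Z (x + y) = Amat g1 g2 d1 d2 ka kb X Y Z x + Amat g1 g2 d1 d2 ka kb X Y Z y"
      by (cases x, cases y) (simp add: Amat_def algebra_simps)
    show "Amat g1 g2 d1 d2 ka kb X Y Z (c *\<^sub>R x) = c *\<^sub>R Amat g1 g2 d1 d2 ka kb X Y Z x"
      by (cases x) (simp add: Amat_def algebra_simps)
  qed
  then show ?thesis by (simp add: linear_conv_bounded_linear)
qed

lemma CH':
  fixes g1 g2 d1 d2 ka kb X Y Z :: real
  defines "M \<equiv> Amat g1 g2 d1 d2 ka kb X Y Z"
  shows "M (M (M (M y))) + (g1+g2+d1+d2) *\<^sub>R M (M (M y))
    + (g1*g2 + (g1+g2)*(d1+d2) + d1*d2 - ka*X) *\<^sub>R M (M y)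
    + (d1*d2*(g1+g2) + (d1+d2)*g1*g2 - ka*(d2+g2)*X) *\<^sub>R M y
    + (g1*g2*d1*d2 - ka*kb*Y*Z - ka*g2*d2*X) *\<^sub>R y = 0"
  unfolding M_def by (cases y) (simp only: CH)

theorem theorem1:
  fixes ma mb ga gb ka kb da db tha thb thaa A1 B1 :: real
    and na nb naa :: nat
    and ra rb pa pb :: real
  assumes pos: "ma > 0" "mb > 0" "ga > 0" "gb > 0" "ka > 0" "kb > 0" "da > 0" "db > 0"
      "tha > 0" "thb > 0" "thaa > 0"
    and nonneg: "A1 \<ge> 0" "B1 \<ge> 0"
    and npos: "na \<ge> 1" "nb \<ge> 1" "naa \<ge> 1"
    and steady: "grn_field ma mb ga gb ka kb da db tha thb thaa A1 B1 na nb naa (ra, rb, pa, pb)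
                   = (0, 0, 0, 0)"
    and ppos: "pa > 0" "pb > 0"
  assumes crit: "let
      D = pa ^ naa * thb ^ nb + pb ^ nb * thaa ^ naa + thb ^ nb * thaa ^ naa;
      X = ma * real naa * pa ^ (naa - 1) * thb ^ nb * thaa ^ naa * (pb ^ nb + thb ^ nb) / D ^ 2;
      Y = - (ma * real nb * pa ^ naa * pb ^ (nb - 1) * thb ^ nb * thaa ^ naa / D ^ 2);
      Z = - (mb * real na * pa ^ (na - 1) * tha ^ na / (pa ^ na + tha ^ na) ^ 2);
      e1 = ga + gb + da + db;
      e2 = ga * gb + (ga + gb) * (da + db) + da * db - ka * X;
      e3 = da * db * (ga + gb) + (da + db) * ga * gb - ka * (db + gb) * X;
      e4 = ga * gb * da * db - ka * kb * Y * Z - ka * gb * db * X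
    in e1 > 0 \<and> e3 > 0 \<and> e4 > 0 \<and> e1 * e2 * e3 - e1 ^ 2 * e4 - e3 ^ 2 > 0"
  shows "locally_asymptotically_stable
           (grn_field ma mb ga gb ka kb da db tha thb thaa A1 B1 na nb naa) (ra, rb, pa, pb)"
proof -
  define f where "f = grn_field ma mb ga gb ka kb da db tha thb thaa A1 B1 na nb naa"
  define S :: state4 where "S = (ra, rb, pa, pb)"
  have fS: "f S = 0" using steady unfolding f_def S_def by (simp add: zero_prod_def)
  define X where "X = ma * real naa * pa ^ (naa - 1) * thb ^ nb * thaa ^ naa * (pb ^ nb + thb ^ nb) / (pa ^ naa * thb ^ nb + pb ^ nb * thaa ^ naa + thb ^ nb * thaa ^ naa) ^ 2"
  define Y where "Y = - (ma * real nb * pa ^ naa * pb ^ (nb - 1) * thb ^ nb * thaa ^ naa / (pa ^ naa * thb ^ nb + pb ^ nb * thaa ^ naa + thb ^ nb * thaa ^ naa) ^ 2)"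
  define Z where "Z = - (mb * real na * pa ^ (na - 1) * tha ^ na / (pa ^ na + tha ^ na) ^ 2)"
  define E1 where "E1 \<sigma> = (ga - \<sigma>) + (gb - \<sigma>) + (da - \<sigma>) + (db - \<sigma>)" for \<sigma> :: real
  define E2 where "E2 \<sigma> = (ga - \<sigma>) * (gb - \<sigma>) + ((ga - \<sigma>) + (gb - \<sigma>)) * ((da - \<sigma>) + (db - \<sigma>)) + (da - \<sigma>) * (db - \<sigma>) - ka * X" for \<sigma> :: real
  define E3 where "E3 \<sigma> = (da - \<sigma>) * (db - \<sigma>) * ((ga - \<sigma>) + (gb - \<sigma>)) + ((da - \<sigma>) + (db - \<sigma>)) * (ga - \<sigma>) * (gb - \<sigma>) - ka * ((db - \<sigma>) + (gb - \<sigma>)) * X" for \<sigma> :: real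
  define E4 where "E4 \<sigma> = (ga - \<sigma>) * (gb - \<sigma>) * (da - \<sigma>) * (db - \<sigma>) - ka * kb * Y * Z - ka * (gb - \<sigma>) * (db - \<sigma>) * X" for \<sigma> :: real
  define HD where "HD \<sigma> = E1 \<sigma> * E2 \<sigma> * E3 \<sigma> - (E1 \<sigma>)^2 * E4 \<sigma> - (E3 \<sigma>)^2" for \<sigma> :: real
  have e: "E1 0 = ga + gb + da + db" "E2 0 = ga * gb + (ga + gb) * (da + db) + da * db - ka * X"
    "E3 0 = da * db * (ga + gb) + (da + db) * ga * gb - ka * (db + gb) * X"
    "E4 0 = ga * gb * da * db - ka * kb * Y * Z - ka * gb * db * X"
    by (simp_all add: E1_def E2_def E3_def E4_def)
  have C: "ga + gb + da + db > 0 \<and> da * db * (ga + gb) + (da + db) * ga * gb - ka * (db + gb) * X > 0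
    \<and> ga * gb * da * db - ka * kb * Y * Z - ka * gb * db * X > 0
    \<and> (ga + gb + da + db) * (ga * gb + (ga + gb) * (da + db) + da * db - ka * X) * (da * db * (ga + gb) + (da + db) * ga * gb - ka * (db + gb) * X)
       - (ga + gb + da + db) ^ 2 * (ga * gb * da * db - ka * kb * Y * Z - ka * gb * db * X)
       - (da * db * (ga + gb) + (da + db) * ga * gb - ka * (db + gb) * X) ^ 2 > 0"
    using crit unfolding Let_def X_def[symmetric] Y_def[symmetric] Z_def[symmetric] .
  have c0: "E1 0 > 0" "E3 0 > 0" "E4 0 > 0" "HD 0 > 0"
    unfolding HD_def e using C by blast+
  have lim: "(E1 \<longlongrightarrow> E1 0) (at_right 0)" "(E3 \<longlongrightarrow> E3 0) (at_right 0)"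
    "(E4 \<longlongrightarrow> E4 0) (at_right 0)" "(HD \<longlongrightarrow> HD 0) (at_right 0)"
  proof -
    have r: "(g \<longlongrightarrow> g 0) (at_right 0)" if "isCont g (0::real)" for g :: "real \<Rightarrow> real"
      using that unfolding isCont_def by (rule tendsto_within_subset) auto
    have "isCont E1 0" "isCont E2 0" "isCont E3 0" "isCont E4 0"
      unfolding E1_def E2_def E3_def E4_def by (intro continuous_intros)+
    then have "isCont HD 0" unfolding HD_def by (intro continuous_intros) auto
    with \<open>isCont E1 0\<close> \<open>isCont E3 0\<close> \<open>isCont E4 0\<close>
    show "(E1 \<longlongrightarrow> E1 0) (at_right 0)" "(E3 \<longlongrightarrow> E3 0) (at_right 0)"
      "(E4 \<longlongrightarrow> E4 0) (at_right 0)" "(HD \<longlongrightarrow> HD 0) (at_right 0)"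
      by (auto intro: r)
  qed
  have "\<forall>\<^sub>F \<sigma> in at_right 0. 0 < \<sigma> \<and> 0 < E1 \<sigma> \<and> 0 < E3 \<sigma> \<and> 0 < E4 \<sigma> \<and> 0 < HD \<sigma>"
    using eventually_at_right_less order_tendstoD(1)[OF lim(1) c0(1)] order_tendstoD(1)[OF lim(2) c0(2)]
      order_tendstoD(1)[OF lim(3) c0(3)] order_tendstoD(1)[OF lim(4) c0(4)]
    by eventually_elim auto
  then obtain \<sigma> where \<sigma>: "0 < \<sigma>" "0 < E1 \<sigma>" "0 < E3 \<sigma>" "0 < E4 \<sigma>" "0 < HD \<sigma>"
    using eventually_happens'[OF trivial_limit_at_right_real] by blast
  obtain b2 b3 b4 s where b: "b2 > 0" "b3 > 0" "b4 > 0" and rel: "s = b3 + b4" "E2 \<sigma> = b2 + s" "E3 \<sigma> = E1 \<sigma> * s" "E4 \<sigma> = b2 * b4"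
    using hurwitz_W[OF \<sigma>(2,3,4) \<sigma>(5)[unfolded HD_def]] by blast
  define M0 where "M0 = Amat ga gb da db ka kb X Y Z"
  define Ms where "Ms = Amat (ga - \<sigma>) (gb - \<sigma>) (da - \<sigma>) (db - \<sigma>) ka kb X Y Z"
  have Ms_eq: "Ms y = M0 y + \<sigma> *\<^sub>R y" for y unfolding Ms_def M0_def by (rule Amat_shift)
  have blMs: "bounded_linear Ms" unfolding Ms_def by (rule Amat_bl)
  have CHs: "Ms (Ms (Ms (Ms y))) + E1 \<sigma> *\<^sub>R Ms (Ms (Ms y)) + E2 \<sigma> *\<^sub>R Ms (Ms y) + E3 \<sigma> *\<^sub>R Ms y + E4 \<sigma> *\<^sub>R y = 0" for y
    unfolding Ms_def E1_def E2_def E3_def E4_def by (rule CH')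
  define V where "V y = (\<Sum>j\<in>JJ. wt b2 b3 b4 j * (lf Ms b4 s j y)^2)" for y
  define DV where "DV y h = (\<Sum>j\<in>JJ. 2 * wt b2 b3 b4 j * lf Ms b4 s j y * lf Ms b4 s j h)" for y h
  have bll: "\<And>j. j \<in> JJ \<Longrightarrow> bounded_linear (lf Ms b4 s j)" using bl_lf[OF blMs] by blast
  have Vd: "(V has_derivative DV y) (at y)" for y
    unfolding V_def DV_def by (rule quadform_deriv[OF finite_JJ bll])
  have "\<exists>K>0. \<forall>y h. \<bar>DV y h\<bar> \<le> K * norm y * norm h"
  proof -
    obtain K where K: "K > 0" "\<And>y h. \<bar>\<Sum>j\<in>JJ. 2 * wt b2 b3 b4 j * lf Ms b4 s j y * lf Ms b4 s j h\<bar> \<le> K * norm y * norm h"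
      by (rule quadform_bound[where w="wt b2 b3 b4" and l="lf Ms b4 s", OF finite_JJ bl_lf[OF blMs]]) blast
    show ?thesis unfolding DV_def using K by blast
  qed
  then obtain K where K: "K > 0" "\<And>y h. \<bar>DV y h\<bar> \<le> K * norm y * norm h" by blast
  note VP = V_props[OF blMs CHs b \<sigma>(2) rel]
  define a where "a = b2 * b3 * b4"
  have a: "a > 0" unfolding a_def using b by simp
  have Vlow: "a * (norm y)^2 \<le> V y" for y unfolding a_def V_def using VP(2) .
  have DVyy: "DV y y = 2 * V y" for y unfolding DV_def V_def using VP(3) .
  have Vup: "V y \<le> K * (norm y)^2" for y
  proof -
    have "2 * V y \<le> K * norm y * norm y" using K(2)[of y y] DVyy[of y] by simp
    moreover have "V y \<ge> 0" using Vlow[of y] a by (smt (verit) mult_nonneg_nonneg zero_le_power2)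
    ultimately show ?thesis by (simp add: power2_eq_square)
  qed
  have DVlie: "DV y (Ms y) \<le> 0" for y unfolding DV_def using VP(1) .
  have linDV: "linear (DV y)" for y by (rule bounded_linear.linear[OF has_derivative_bounded_linear[OF Vd]])
  have dfS: "(f has_derivative M0) (at S)"
    unfolding f_def S_def M0_def
    by (rule deriv_grn[OF ppos pos(9,10,11) npos X_def Y_def Z_def])
  define \<eta> where "\<eta> = \<sigma> * a / K"
  have \<eta>: "\<eta> > 0" unfolding \<eta>_def using \<sigma>(1) a K by simp
  have "\<forall>e>0. \<exists>d>0. \<forall>z. norm (z - S) < d \<longrightarrow> norm (f z - f S - M0 (z - S)) \<le> e * norm (z - S)"
    using dfS unfolding has_derivative_at_alt by (rule conjunct2)
  then obtain d where d: "d > 0" "\<And>z. norm (z - S) < d \<Longrightarrow> norm (f z - f S - M0 (z - S)) \<le> \<eta> * norm (z - S)"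
    using \<eta> by blast
  define \<rho> where "\<rho> = min (d / 2) (min pa pb / 2)"
  have \<rho>: "\<rho> > 0" unfolding \<rho>_def using d ppos by simp
  have decf: "DV (z - S) (f z) \<le> - \<sigma> * V (z - S)" if z: "z \<in> cball S \<rho>" for z
  proof -
    define y where "y = z - S"
    define g where "g = f z - M0 y"
    have ny: "norm y < d" using z \<rho> d unfolding y_def \<rho>_def by (simp add: dist_norm norm_minus_commute)
    have g: "norm g \<le> \<eta> * norm y" using d(2)[of z] ny fS unfolding g_def y_def by simp
    have fz: "f z = Ms y - \<sigma> *\<^sub>R y + g" unfolding g_def Ms_eq by simp
    have "DV y (f z) = DV y (Ms y) - \<sigma> * DV y y + DV y g"
      unfolding fz using linDV[of y] by (simp add: linear_add linear_diff linear_scale)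
    also have "\<dots> \<le> 0 - \<sigma> * (2 * V y) + K * norm y * (\<eta> * norm y)"
    proof -
      have "DV y g \<le> K * norm y * norm g" using K(2)[of y g] by simp
      also have "\<dots> \<le> K * norm y * (\<eta> * norm y)" using K g by (intro mult_left_mono) auto
      finally have "DV y g \<le> K * norm y * (\<eta> * norm y)" .
      then show ?thesis unfolding DVyy using DVlie[of y] by linarith
    qed
    also have "K * norm y * (\<eta> * norm y) = \<sigma> * (a * (norm y)^2)"
      unfolding \<eta>_def using K by (simp add: power2_eq_square field_simps)
    also have "\<sigma> * (a * (norm y)^2) \<le> \<sigma> * V y" using Vlow[of y] \<sigma>(1) by (intro mult_left_mono) auto
    finally show ?thesis unfolding y_def by linarith
  qed
  \<comment> \<open>globally Lipschitz modification\<close>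
  define R where "R = 2 * (pa + pb)"
  have R: "R \<ge> 0" unfolding R_def using ppos by simp
  obtain L where L: "L > 0" "\<And>u v. norm (f (clampS R u) - f (clampS R v)) \<le> L * norm (u - v)"
    using grn_lip[OF pos R] unfolding f_def by metis
  have Feq: "f (clampS R z) = f z" if z: "z \<in> cball S \<rho>" for z
  proof -
    have nz: "norm (z - S) \<le> \<rho>" using z by (simp add: dist_norm norm_minus_commute)
    have h3: "\<bar>fst (snd (snd z)) - pa\<bar> \<le> \<rho>" "\<bar>snd (snd (snd z)) - pb\<bar> \<le> \<rho>"
      using comp_le(3,4)[of "z - S"] nz unfolding S_def by auto
    have "\<rho> \<le> pa / 2" "\<rho> \<le> pb / 2" unfolding \<rho>_def by auto
    then have "cl R (fst (snd (snd z))) = fst (snd (snd z))" "cl R (snd (snd (snd z))) = snd (snd (snd z))"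
      using h3 ppos by (auto intro!: cl_id simp: R_def abs_le_iff)
    then have "clampS R z = z" unfolding clampS_def by simp
    then show ?thesis by simp
  qed
  show ?thesis
    unfolding f_def[symmetric] S_def[symmetric]
    by (rule abstract_las[OF a K(1) \<sigma>(1) \<rho> Vlow Vup Vd decf L(2) L(1) Feq]) auto
qed

end
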